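(* Let $M$ be a matroid with $\lambda(M)=\sigma(M)=k$ and $\rank(M)=r$, and let $C_1,\ldots,C_\ell$ be all the cocircuits of $M$ of size $k$. Then the crux $\chi(M)=M\setminus(C_1\cup\cdots\cup C_\ell)$ has rank $r-\ell$.
   Context: $\sigma(M)$ is the maximum number of pairwise disjoint bases of $M$; $\lambda(M)$ is the minimum size of a cocircuit (a minimal set meeting every base). The crux $\chi(M)$ of $M$ is the matroid obtained from $M$ by deleting all elements lying in some minimum-size cocircuit; if this removes all elements, $\chi(M)$ is the empty matroid (of rank $0$). *)

theory Defs
  imports Main
begin

definition matroid :: "'a set \<Rightarrow> ('a set \<Rightarrow> bool) \<Rightarrow> bool" where
  "matroid E indep \<longleftrightarrow>
     finite E \<and>
     (\<forall>X. indep X \<longrightarrow> X \<subseteq> E) \<and>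
     indep {} \<and>
     (\<forall>X Y. indep X \<and> Y \<subseteq> X \<longrightarrow> indep Y) \<and>
     (\<forall>X Y. indep X \<and> indep Y \<and> card X < card Y \<longrightarrow>
        (\<exists>y \<in> Y - X. indep (insert y X)))"

definition basis :: "'a set \<Rightarrow> ('a set \<Rightarrow> bool) \<Rightarrow> 'a set \<Rightarrow> bool" where
  "basis E indep B \<longleftrightarrow> indep B \<and> (\<forall>Y. indep Y \<and> B \<subseteq> Y \<longrightarrow> Y = B)"

definition mrank :: "'a set \<Rightarrow> ('a set \<Rightarrow> bool) \<Rightarrow> 'a set \<Rightarrow> nat" where
  "mrank E indep A = Max {card X | X. X \<subseteq> A \<and> indep X}"

definition matroid_rank :: "'a set \<Rightarrow> ('a set \<Rightarrow> bool) \<Rightarrow> nat" where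
  "matroid_rank E indep = mrank E indep E"

definition cocircuit :: "'a set \<Rightarrow> ('a set \<Rightarrow> bool) \<Rightarrow> 'a set \<Rightarrow> bool" where
  "cocircuit E indep C \<longleftrightarrow>
     C \<subseteq> E \<and>
     (\<forall>B. basis E indep B \<longrightarrow> C \<inter> B \<noteq> {}) \<and>
     (\<forall>D. D \<subset> C \<longrightarrow> (\<exists>B. basis E indep B \<and> D \<inter> B = {}))"

definition matroid_lambda :: "'a set \<Rightarrow> ('a set \<Rightarrow> bool) \<Rightarrow> nat" where
  "matroid_lambda E indep = Min {card C | C. cocircuit E indep C}"

definition matroid_sigma :: "'a set \<Rightarrow> ('a set \<Rightarrow> bool) \<Rightarrow> nat" where
  "matroid_sigma E indep = Max {card F | F.
      (\<forall>B \<in> F. basis E indep B) \<and> (\<forall>B1 \<in> F. \<forall>B2 \<in> F. B1 \<noteq> B2 \<longrightarrow> B1 \<inter> B2 = {})}"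

definition mdelete :: "'a set \<Rightarrow> ('a set \<Rightarrow> bool) \<Rightarrow> 'a set \<Rightarrow> 'a set \<times> ('a set \<Rightarrow> bool)" where
  "mdelete E indep X = (E - X, \<lambda>Y. indep Y \<and> Y \<subseteq> E - X)"

definition crux :: "'a set \<Rightarrow> ('a set \<Rightarrow> bool) \<Rightarrow> 'a set \<times> ('a set \<Rightarrow> bool)" where
  "crux E indep = mdelete E indep
     (\<Union> {C. cocircuit E indep C \<and> card C = matroid_lambda E indep})"

end

theory Submission
  imports Defs
begin

lemma m_sub: "matroid E indep \<Longrightarrow> indep X \<Longrightarrow> X \<subseteq> E"
  unfolding matroid_def by blast

lemma m_fin: "matroid E indep \<Longrightarrow> indep X \<Longrightarrow> finite X"
  unfolding matroid_def by (meson finite_subset)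

lemma m_empty: "matroid E indep \<Longrightarrow> indep {}"
  unfolding matroid_def by blast

lemma m_hered: "matroid E indep \<Longrightarrow> indep X \<Longrightarrow> Y \<subseteq> X \<Longrightarrow> indep Y"
  unfolding matroid_def by blast

lemma m_aug: "matroid E indep \<Longrightarrow> indep X \<Longrightarrow> indep Y \<Longrightarrow> card X < card Y \<Longrightarrow>
   \<exists>y \<in> Y - X. indep (insert y X)"
  unfolding matroid_def by blast

lemma mrank_set_fin:
  assumes "matroid E indep"
  shows "finite {card X | X. X \<subseteq> A \<and> indep X}"
proof -
  have "{card X | X. X \<subseteq> A \<and> indep X} \<subseteq> {..card E}"
  proof
    fix n assume "n \<in> {card X | X. X \<subseteq> A \<and> indep X}"
    then obtain X where "n = card X" "indep X" by blast
    then show "n \<in> {..card E}" using m_sub[OF assms] assms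
      by (auto simp: matroid_def intro: card_mono)
  qed
  then show ?thesis by (rule finite_subset) simp
qed

lemma mrank_ge:
  assumes "matroid E indep" "X \<subseteq> A" "indep X"
  shows "card X \<le> mrank E indep A"
  unfolding mrank_def using mrank_set_fin[OF assms(1)] assms(2,3)
  by (intro Max_ge) auto

lemma mrank_obtain:
  assumes "matroid E indep"
  shows "\<exists>X. X \<subseteq> A \<and> indep X \<and> card X = mrank E indep A"
proof -
  have "mrank E indep A \<in> {card X | X. X \<subseteq> A \<and> indep X}"
    unfolding mrank_def using mrank_set_fin[OF assms] m_empty[OF assms]
    by (intro Max_in) auto
  then show ?thesis by auto
qed

lemma mrank_mono:
  assumes "matroid E indep" "A \<subseteq> A'"
  shows "mrank E indep A \<le> mrank E indep A'"
proof -
  obtain X where X: "X \<subseteq> A" "indep X" "card X = mrank E indep A"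
    using mrank_obtain[OF assms(1), of A] by blast
  have "X \<subseteq> A'" using X(1) assms(2) by blast
  then have "card X \<le> mrank E indep A'" using mrank_ge[OF assms(1) _ X(2)] by blast
  then show ?thesis using X(3) by simp
qed

lemma mrank_ext:
  assumes m: "matroid E indep"
  shows "indep I \<Longrightarrow> I \<subseteq> A \<Longrightarrow> \<exists>J. I \<subseteq> J \<and> J \<subseteq> A \<and> indep J \<and> card J = mrank E indep A"
proof (induct "mrank E indep A - card I" arbitrary: I rule: less_induct)
  case less
  show ?case
  proof (cases "card I < mrank E indep A")
    case False
    then show ?thesis using mrank_ge[OF m less.prems(2,1)] less.prems by auto
  next
    case True
    obtain K where K: "K \<subseteq> A" "indep K" "card K = mrank E indep A"
      using mrank_obtain[OF m] by blast
    obtain y where y: "y \<in> K - I" "indep (insert y I)"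
      using m_aug[OF m less.prems(1) K(2)] True K(3) by auto
    have fI: "finite I" using m_fin[OF m less.prems(1)] .
    have c: "card (insert y I) = card I + 1" using y fI by simp
    have "\<exists>J. insert y I \<subseteq> J \<and> J \<subseteq> A \<and> indep J \<and> card J = mrank E indep A"
    proof (rule less.hyps)
      show "mrank E indep A - card (insert y I) < mrank E indep A - card I" using c True by linarith
      show "indep (insert y I)" using y by blast
      show "insert y I \<subseteq> A" using y K(1) less.prems(2) by blast
    qed
    then show ?thesis by blast
  qed
qed

lemma basis_iff:
  assumes m: "matroid E indep"
  shows "basis E indep B \<longleftrightarrow> indep B \<and> card B = mrank E indep E"
proof
  assume b: "basis E indep B"
  then have "indep B" unfolding basis_def by blast
  then obtain J where J: "B \<subseteq> J" "J \<subseteq> E" "indep J" "card J = mrank E indep E"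
    using mrank_ext[OF m, of B E] m_sub[OF m] by blast
  then have "J = B" using b unfolding basis_def by blast
  then show "indep B \<and> card B = mrank E indep E" using J by blast
next
  assume a: "indep B \<and> card B = mrank E indep E"
  show "basis E indep B" unfolding basis_def
  proof (intro conjI allI impI)
    show "indep B" using a by blast
    fix Y assume Y: "indep Y \<and> B \<subseteq> Y"
    have "card Y \<le> card B" using mrank_ge[OF m m_sub[OF m] ] Y a by auto
    have fY: "finite Y" using Y m_fin[OF m] by blast
    have "card B \<le> card Y" using card_mono[OF fY] Y by blast
    then have "card B = card Y" using \<open>card Y \<le> card B\<close> by simp
    then show "Y = B" using card_subset_eq[OF fY, of B] Y by blast
  qed
qed

lemma meets_all:
  assumes m: "matroid E indep"
  shows "(\<forall>B. basis E indep B \<longrightarrow> D \<inter> B \<noteq> {}) \<longleftrightarrow> mrank E indep (E - D) < mrank E indep E"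
proof
  assume a: "\<forall>B. basis E indep B \<longrightarrow> D \<inter> B \<noteq> {}"
  show "mrank E indep (E - D) < mrank E indep E"
  proof (rule ccontr)
    assume "\<not> ?thesis"
    moreover have "mrank E indep (E - D) \<le> mrank E indep E" by (rule mrank_mono[OF m]) auto
    moreover obtain X where X: "X \<subseteq> E - D" "indep X" "card X = mrank E indep (E - D)"
      using mrank_obtain[OF m] by blast
    ultimately have "basis E indep X" using basis_iff[OF m] by auto
    then show False using a X by auto
  qed
next
  assume a: "mrank E indep (E - D) < mrank E indep E"
  show "\<forall>B. basis E indep B \<longrightarrow> D \<inter> B \<noteq> {}"
  proof (intro allI impI)
    fix B assume b: "basis E indep B"
    show "D \<inter> B \<noteq> {}"
    proof
      assume "D \<inter> B = {}"
      then have "B \<subseteq> E - D" using b m_sub[OF m] unfolding basis_def by blast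
      then show False using mrank_ge[OF m, of B "E - D"] b basis_iff[OF m] a by auto
    qed
  qed
qed

lemma mrank_insert:
  assumes m: "matroid E indep"
  shows "mrank E indep (insert e A) \<le> mrank E indep A + 1"
proof -
  obtain X where X: "X \<subseteq> insert e A" "indep X" "card X = mrank E indep (insert e A)"
    using mrank_obtain[OF m] by blast
  have "X - {e} \<subseteq> A" "indep (X - {e})" using X m_hered[OF m] by auto
  then have "card (X - {e}) \<le> mrank E indep A" using mrank_ge[OF m] by blast
  moreover have "card X \<le> card (X - {e}) + 1" using m_fin[OF m X(2)]
    by (cases "e \<in> X") (auto simp: card_Diff_singleton_if card_gt_0_iff)
  ultimately show ?thesis using X by linarith
qed

lemma submod:
  assumes m: "matroid E indep"
  shows "mrank E indep (X \<inter> Y) + mrank E indep (X \<union> Y) \<le> mrank E indep X + mrank E indep Y"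
proof -
  obtain I where I: "I \<subseteq> X \<inter> Y" "indep I" "card I = mrank E indep (X \<inter> Y)"
    using mrank_obtain[OF m] by blast
  obtain J where J: "I \<subseteq> J" "J \<subseteq> X \<union> Y" "indep J" "card J = mrank E indep (X \<union> Y)"
    using mrank_ext[OF m I(2), of "X \<union> Y"] I(1) by blast
  have fJ: "finite J" using m_fin[OF m J(3)] .
  have "card I \<le> card (J \<inter> X \<inter> Y)" using I J fJ by (intro card_mono) auto
  moreover have "card (J \<inter> X) + card (J \<inter> Y) = card ((J \<inter> X) \<union> (J \<inter> Y)) + card ((J \<inter> X) \<inter> (J \<inter> Y))"
    using fJ by (intro card_Un_Int) auto
  moreover have "(J \<inter> X) \<union> (J \<inter> Y) = J" using J by auto
  moreover have "(J \<inter> X) \<inter> (J \<inter> Y) = J \<inter> X \<inter> Y" by auto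
  moreover have "card (J \<inter> X) \<le> mrank E indep X"
    using mrank_ge[OF m, of "J \<inter> X" X] m_hered[OF m J(3)] by auto
  moreover have "card (J \<inter> Y) \<le> mrank E indep Y"
    using mrank_ge[OF m, of "J \<inter> Y" Y] m_hered[OF m J(3)] by auto
  ultimately have "card (J \<inter> X) + card (J \<inter> Y) = card J + card (J \<inter> X \<inter> Y)"
    and "card I \<le> card (J \<inter> X \<inter> Y)"
    and "card (J \<inter> X) \<le> mrank E indep X" and "card (J \<inter> Y) \<le> mrank E indep Y"
    by simp_all
  then show ?thesis using I J by linarith
qed

lemma coc_sub: "cocircuit E indep C \<Longrightarrow> C \<subseteq> E"
  unfolding cocircuit_def by blast

lemma coc_rank:
  assumes m: "matroid E indep" and c: "cocircuit E indep C"
  shows "mrank E indep (E - C) < mrank E indep E"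
  using c meets_all[OF m] unfolding cocircuit_def by blast

lemma coc_min:
  assumes m: "matroid E indep" and c: "cocircuit E indep C" and e: "e \<in> C"
  shows "mrank E indep (insert e (E - C)) = mrank E indep E"
proof -
  have "C - {e} \<subset> C" using e by auto
  then obtain B where "basis E indep B" "(C - {e}) \<inter> B = {}"
    using c unfolding cocircuit_def by blast
  then have "\<not> mrank E indep (E - (C - {e})) < mrank E indep E"
    using meets_all[OF m, of "C - {e}"] by blast
  moreover have "E - (C - {e}) = insert e (E - C)" using e coc_sub[OF c] by auto
  moreover have "mrank E indep (insert e (E - C)) \<le> mrank E indep E"
    using e coc_sub[OF c] by (intro mrank_mono[OF m]) auto
  ultimately show ?thesis by simp
qed

lemma coc_drop:
  assumes m: "matroid E indep" and c: "cocircuit E indep C" and A: "A \<subseteq> E" "C \<subseteq> A"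
  shows "mrank E indep (A - C) < mrank E indep A"
proof (rule ccontr)
  assume n: "\<not> ?thesis"
  obtain X where X: "X \<subseteq> A - C" "indep X" "card X = mrank E indep (A - C)"
    using mrank_obtain[OF m] by blast
  have "card X \<le> mrank E indep A" using mrank_ge[OF m, of X A] X by auto
  with n X have cX: "card X = mrank E indep A" by linarith
  obtain Z where Z: "X \<subseteq> Z" "Z \<subseteq> E" "indep Z" "card Z = mrank E indep E"
    using mrank_ext[OF m X(2), of E] X A by blast
  have fZ: "finite Z" using m_fin[OF m Z(3)] .
  have "card (Z \<inter> A) \<le> mrank E indep A"
    using mrank_ge[OF m, of "Z \<inter> A" A] m_hered[OF m Z(3)] by auto
  moreover have "X \<subseteq> Z \<inter> A" using X Z by auto
  moreover have fZA: "finite (Z \<inter> A)" using fZ by blast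
  moreover have "card X \<le> card (Z \<inter> A)" using card_mono[OF fZA] \<open>X \<subseteq> Z \<inter> A\<close> by blast
  ultimately have "X = Z \<inter> A" using cX card_subset_eq[OF fZA, of X] by simp
  then have "C \<inter> Z = {}" using X A by auto
  moreover have "basis E indep Z" using basis_iff[OF m] Z by auto
  ultimately show False using c unfolding cocircuit_def by blast
qed

lemma card_one:
  assumes m: "matroid E indep" and F: "\<forall>B\<in>F. basis E indep B"
    "\<forall>B1\<in>F. \<forall>B2\<in>F. B1 \<noteq> B2 \<longrightarrow> B1 \<inter> B2 = {}" "card F = k" "k \<ge> 1"
    and c: "cocircuit E indep C" "card C = k"
  shows "\<forall>B\<in>F. card (C \<inter> B) = 1" "C \<subseteq> \<Union>F"
proof -
  have fF: "finite F" using F(3,4) card.infinite by (metis not_one_le_zero)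
  have fC: "finite C" using coc_sub[OF c(1)] m unfolding matroid_def by (meson finite_subset)
  have ne: "\<forall>B\<in>F. C \<inter> B \<noteq> {}" using c F(1) unfolding cocircuit_def by blast
  have ge1: "\<forall>B\<in>F. 1 \<le> card (C \<inter> B)" using ne fC by (simp add: card_gt_0_iff Suc_le_eq)
  have eq: "(\<Sum>B\<in>F. card (C \<inter> B)) = card (\<Union>B\<in>F. C \<inter> B)"
    using fF fC F(2) by (intro card_UN_disjoint[symmetric]) auto
  have "(\<Union>B\<in>F. C \<inter> B) \<subseteq> C" by blast
  then have le: "card (\<Union>B\<in>F. C \<inter> B) \<le> k" using card_mono[OF fC] c(2) by simp
  have sumge: "(\<Sum>B\<in>F. card (C \<inter> B)) \<ge> card F"
    using sum_mono[of F "\<lambda>_. 1" "\<lambda>B. card (C \<inter> B)"] ge1 by simp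
  show "\<forall>B\<in>F. card (C \<inter> B) = 1"
  proof
    fix B0 assume B0: "B0 \<in> F"
    have s: "(\<Sum>B\<in>F. card (C \<inter> B)) = card (C \<inter> B0) + (\<Sum>B\<in>F - {B0}. card (C \<inter> B))"
      using fF B0 by (simp add: sum.remove)
    have "(\<Sum>B\<in>F - {B0}. card (C \<inter> B)) \<ge> card (F - {B0})"
      using sum_mono[of "F - {B0}" "\<lambda>_. 1" "\<lambda>B. card (C \<inter> B)"] ge1 by simp
    moreover have "card (F - {B0}) = k - 1" using B0 fF F(3) by simp
    ultimately have "card (C \<inter> B0) \<le> 1" using s eq le F(4) by linarith
    then show "card (C \<inter> B0) = 1" using ge1 B0 by (meson antisym)
  qed
  have "card (\<Union>B\<in>F. C \<inter> B) = card C" using eq le sumge F(3) c(2) by linarith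
  moreover have "(\<Union>B\<in>F. C \<inter> B) \<subseteq> C" by blast
  ultimately have "(\<Union>B\<in>F. C \<inter> B) = C" using card_subset_eq[OF fC] by simp
  then show "C \<subseteq> \<Union>F" by blast
qed

theorem mainTheorem9:
  fixes E :: "'a set" and indep :: "'a set \<Rightarrow> bool" and k r :: nat
  assumes "matroid E indep"
    and "matroid_lambda E indep = k"
    and "matroid_sigma E indep = k"
    and "matroid_rank E indep = r"
  shows "int (matroid_rank (fst (crux E indep)) (snd (crux E indep)))
           = int r - int (card {C. cocircuit E indep C \<and> card C = k})"
proof -
  note m = assms(1)
  define S where "S = {C. cocircuit E indep C \<and> card C = k}"
  define U where "U = \<Union>S"
  have fE: "finite E" using m unfolding matroid_def by blast
  have r: "mrank E indep E = r" using assms(4) unfolding matroid_rank_def by simp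
  have crux_rank: "matroid_rank (fst (crux E indep)) (snd (crux E indep)) = mrank E indep (E - U)"
  proof -
    have e: "{card X |X. X \<subseteq> E - U \<and> indep X \<and> X \<subseteq> E - U} = {card X |X. X \<subseteq> E - U \<and> indep X}"
      by auto
    show ?thesis
      unfolding crux_def mdelete_def matroid_rank_def mrank_def assms(2)
      using e by (simp add: U_def S_def)
  qed
  have finS: "finite S" unfolding S_def
    by (rule finite_subset[of _ "Pow E"]) (auto dest: coc_sub simp: fE)
  obtain B0 where B0: "basis E indep B0"
    using mrank_obtain[OF m, of E] basis_iff[OF m] by blast
  define SF where "SF = {card F | F. (\<forall>B \<in> F. basis E indep B) \<and>
       (\<forall>B1 \<in> F. \<forall>B2 \<in> F. B1 \<noteq> B2 \<longrightarrow> B1 \<inter> B2 = {})}"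
  have "SF \<subseteq> {..card (Pow E)}"
  proof
    fix n assume "n \<in> SF"
    then obtain F where "n = card F" "\<forall>B \<in> F. basis E indep B" unfolding SF_def by blast
    moreover have "\<forall>B. basis E indep B \<longrightarrow> B \<subseteq> E" using m_sub[OF m] unfolding basis_def by blast
    ultimately have "F \<subseteq> Pow E" "n = card F" by auto
    then show "n \<in> {..card (Pow E)}" using fE by (simp add: card_mono)
  qed
  then have "finite SF" by (rule finite_subset) simp
  moreover have "SF \<noteq> {}" unfolding SF_def by auto
  ultimately have "Max SF \<in> SF" by (rule Max_in)
  then obtain F where F: "\<forall>B\<in>F. basis E indep B"
    "\<forall>B1\<in>F. \<forall>B2\<in>F. B1 \<noteq> B2 \<longrightarrow> B1 \<inter> B2 = {}" "card F = k"
    using assms(3) unfolding matroid_sigma_def SF_def by auto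
  have disj: "C \<inter> C' = {}" if C: "C \<in> S" and C': "C' \<in> S" and ne: "C \<noteq> C'" for C C'
  proof (rule ccontr)
    assume "C \<inter> C' \<noteq> {}"
    then obtain e where e: "e \<in> C" "e \<in> C'" by blast
    have cC: "cocircuit E indep C" "card C = k" using C S_def by auto
    have cC': "cocircuit E indep C'" "card C' = k" using C' S_def by auto
    have "C \<noteq> {}" using e by auto
    moreover have "finite C" using fE coc_sub[OF cC(1)] finite_subset by blast
    ultimately have "card C > 0" by (simp add: card_gt_0_iff)
    then have k1: "k \<ge> 1" using cC(2) by simp
    note o1 = card_one[OF m F k1 cC] and o2 = card_one[OF m F k1 cC']
    obtain Bj where Bj: "Bj \<in> F" "e \<in> Bj" using o1(2) e by blast
    have "card (C \<inter> Bj) = 1" using o1(1) Bj by blast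
    then obtain x where xx: "C \<inter> Bj = {x}" by (auto simp: card_1_singleton_iff)
    have "e \<in> C \<inter> Bj" using Bj(2) e(1) by blast
    then have "x = e" unfolding xx by simp
    then have "C \<inter> Bj = {e}" using xx by simp
    moreover have "card (C' \<inter> Bj) = 1" using o2(1) Bj by blast
    then obtain x where xx: "C' \<inter> Bj = {x}" by (auto simp: card_1_singleton_iff)
    have "e \<in> C' \<inter> Bj" using Bj(2) e(2) by blast
    then have "x = e" unfolding xx by simp
    then have "C' \<inter> Bj = {e}" using xx by simp
    ultimately have dB: "((C \<union> C') - {e}) \<inter> Bj = {}" by blast
    have "\<not> C' \<subseteq> C"
    proof
      assume "C' \<subseteq> C"
      then have "C' \<subset> C" using ne by blast
      then obtain B where "basis E indep B" "C' \<inter> B = {}" using cC(1) unfolding cocircuit_def by blast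
      then show False using cC'(1) unfolding cocircuit_def by blast
    qed
    then obtain f where f: "f \<in> C'" "f \<notin> C" by blast
    have rH: "mrank E indep (E - C) + 1 = r"
      using coc_min[OF m cC(1) e(1)] coc_rank[OF m cC(1)] mrank_insert[OF m, of e "E - C"] r by linarith
    have rH': "mrank E indep (E - C') + 1 = r"
      using coc_min[OF m cC'(1) e(2)] coc_rank[OF m cC'(1)] mrank_insert[OF m, of e "E - C'"] r by linarith
    have "insert f (E - C') \<subseteq> (E - C) \<union> (E - C')" using f coc_sub[OF cC'(1)] by blast
    then have "mrank E indep (insert f (E - C')) \<le> mrank E indep ((E - C) \<union> (E - C'))" by (rule mrank_mono[OF m])
    moreover have "mrank E indep ((E - C) \<union> (E - C')) \<le> r"
      using mrank_mono[OF m, of "(E - C) \<union> (E - C')" E] r by blast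
    moreover have "mrank E indep (insert f (E - C')) = r" using coc_min[OF m cC'(1) f(1)] r by simp
    ultimately have "mrank E indep ((E - C) \<union> (E - C')) = r" by linarith
    then have "mrank E indep ((E - C) \<inter> (E - C')) + 2 \<le> r"
      using submod[OF m, of "E - C" "E - C'"] rH rH' by linarith
    then have "mrank E indep (insert e ((E - C) \<inter> (E - C'))) < r"
      using mrank_insert[OF m, of e "(E - C) \<inter> (E - C')"] by linarith
    moreover have "E - ((C \<union> C') - {e}) = insert e ((E - C) \<inter> (E - C'))"
      using e coc_sub[OF cC(1)] by blast
    ultimately have "mrank E indep (E - ((C \<union> C') - {e})) < mrank E indep E"
      using r by simp
    then have "\<forall>B. basis E indep B \<longrightarrow> ((C \<union> C') - {e}) \<inter> B \<noteq> {}"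
      using meets_all[OF m] by blast
    then show False using dB F(1) Bj by blast
  qed
  have upper: "T \<subseteq> S \<Longrightarrow> mrank E indep (E - \<Union>T) + card T \<le> r" for T
  proof -
    assume TS: "T \<subseteq> S"
    have "finite T" using finS TS finite_subset by blast
    then show ?thesis using TS
    proof (induction T rule: finite_induct)
      case empty
      then show ?case using r by simp
    next
      case (insert C T)
      have cC: "cocircuit E indep C" using insert S_def by auto
      have "C \<subseteq> E - \<Union>T" using disj insert coc_sub[OF cC] by blast
      then have "mrank E indep ((E - \<Union>T) - C) < mrank E indep (E - \<Union>T)"
        by (intro coc_drop[OF m cC]) auto
      moreover have "E - \<Union>(insert C T) = (E - \<Union>T) - C" by auto
      ultimately show ?case using insert by simp
    qed
  qed
  have up: "mrank E indep (E - U) + card S \<le> r" using upper[of S] U_def by simp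
  have low: "r \<le> mrank E indep (E - U) + card S"
  proof (cases "S = {}")
    case True
    then show ?thesis using r U_def by simp
  next
    case False
    then obtain C0 where C0: "C0 \<in> S" by blast
    have cC0: "cocircuit E indep C0" "card C0 = k" using C0 S_def by auto
    have "C0 \<inter> B0 \<noteq> {}" using cC0 B0 unfolding cocircuit_def by blast
    then have "C0 \<noteq> {}" by blast
    moreover have "finite C0" using fE coc_sub[OF cC0(1)] finite_subset by blast
    ultimately have "card C0 > 0" by (simp add: card_gt_0_iff)
    then have k1: "k \<ge> 1" using cC0(2) by simp
    have "F \<noteq> {}" using F(3) k1 by auto
    then obtain B where B: "B \<in> F" by blast
    have bB: "basis E indep B" using F(1) B by blast
    have indB: "indep B" "card B = r" using bB basis_iff[OF m] r by auto
    have fB: "finite B" using m_fin[OF m indB(1)] .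
    have c1: "card (B \<inter> C) = 1" if "C \<in> S" for C
    proof -
      have "cocircuit E indep C" "card C = k" using that S_def by auto
      then have "card (C \<inter> B) = 1" using card_one(1)[OF m F k1] B by blast
      then show ?thesis by (simp add: Int_commute)
    qed
    have BU: "B \<inter> U = (\<Union>C\<in>S. B \<inter> C)" unfolding U_def by blast
    have "card (B \<inter> U) \<le> (\<Sum>C\<in>S. card (B \<inter> C))" unfolding BU by (rule card_UN_le[OF finS])
    also have "\<dots> = card S" using c1 by simp
    finally have bu: "card (B \<inter> U) \<le> card S" .
    have "card B = card (B - U) + card (B \<inter> U)" using card_Int_Diff[OF fB, of U] by simp
    moreover have "card (B - U) \<le> mrank E indep (E - U)"
      using mrank_ge[OF m, of "B - U" "E - U"] m_hered[OF m indB(1)] m_sub[OF m indB(1)] by auto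
    ultimately show ?thesis using bu indB by linarith
  qed
  have cS: "card {C. cocircuit E indep C \<and> card C = k} = card S" by (simp add: S_def)
  have eqn: "r = mrank E indep (E - U) + card S" using up low by linarith
  have "int r = int (mrank E indep (E - U)) + int (card S)" unfolding eqn by simp
  then show ?thesis unfolding crux_rank cS by simp
qed

end
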